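(* In the discrete-time load balancing system described in the context (with parameter $\epsilon>0$ and any Markovian policy), $Q_n^{(\epsilon)}(t+1)U_n^{(\epsilon)}(t)=0$ for all $n\in\{1,\dots,N\}$ and $t\ge0$. Moreover, if the chain $\{\mathbf{Q}(t)\}$ is positive recurrent and its stationary distribution has a finite first moment, then $$\mathbb{E}\big[\|\overline{\mathbf{U}}^{(\epsilon)}\|_1^2\big]\le c_1\epsilon\qquad\text{and}\qquad \mathbb{E}\big[\|\overline{\mathbf{U}}^{(\epsilon)}\|_r^r\big]\le c_r\epsilon\quad (r\in(1,\infty)),$$ where the constants $c_1,c_r$ depend only on $N$, $S_{\max}$ and $r$, not on $\epsilon$.
   Context: Model: a discrete-time system with one dispatcher and $N$ servers; server $n$ has an infinite-buffer FIFO queue of length $Q_n(t)$ at the beginning of slot $t$. Arrivals $A_\Sigma(t)$: integer valued, i.i.d. over $t$, $A_\Sigma(t)\le A_{\max}<\infty$. Service $S_n(t)$: integer valued, i.i.d. over $t$, independent across servers and of arrivals, $S_n(t)\le S_{\max}<\infty$, mean $\mu_n$; $\mu_\Sigma=\sum_n\mu_n$. In each slot the arrivals are routed to one queue by a rule depending only on $\mathbf{Q}(t)$; $A_n(t)$ is the number routed to queue $n$. Dynamics: $Q_n(t+1)=Q_n(t)+A_n(t)-S_n(t)+U_n(t)$ with unused service $U_n(t)=\max\{S_n(t)-Q_n(t)-A_n(t),0\}$. In the system with parameter $\epsilon>0$ the arrival mean is $\mu_\Sigma-\epsilon$, and superscript $(\epsilon)$ marks its quantities. $\overline{\mathbf{U}}^{(\epsilon)}$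 denotes the unused-service vector $\mathbf{U}(t)$ when $\mathbf{Q}(t)$ is distributed according to the stationary distribution. $\|\mathbf{x}\|_r=(\sum_n|x_n|^r)^{1/r}$. *)

theory Defs
  imports "HOL-Probability.Probability"
begin

text \<open>Servers are indexed by 0..N-1. A queue-length vector is a function nat => nat
 (components with index >= N are irrelevant / zero).  In one slot: the total arrival
 a (drawn from arr), the chosen queue k (drawn from route q, depending only on the
 current state q), and the service vector s (independent components S n) are drawn
 independently.\<close>

definition routed :: "nat \<Rightarrow> nat \<Rightarrow> nat \<Rightarrow> nat" where
  "routed a k n = (if n = k then a else 0)"

text \<open>Unused service U_n = max(S_n - Q_n - A_n, 0) (truncated nat subtraction).\<close>
definition unused :: "(nat \<Rightarrow> nat) \<Rightarrow> nat \<Rightarrow> nat \<Rightarrow> (nat \<Rightarrow> nat) \<Rightarrow> nat \<Rightarrow> nat" where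
  "unused q a k s n = s n - (q n + routed a k n)"

definition next_state :: "nat \<Rightarrow> (nat \<Rightarrow> nat) \<Rightarrow> nat \<Rightarrow> nat \<Rightarrow> (nat \<Rightarrow> nat) \<Rightarrow> nat \<Rightarrow> nat" where
  "next_state N q a k s n =
     (if n < N then (q n + routed a k n + unused q a k s n) - s n else 0)"

definition service_vec :: "nat \<Rightarrow> (nat \<Rightarrow> nat pmf) \<Rightarrow> (nat \<Rightarrow> nat) pmf" where
  "service_vec N S = Pi_pmf {..<N} 0 S"

definition step :: "nat \<Rightarrow> nat pmf \<Rightarrow> (nat \<Rightarrow> nat pmf) \<Rightarrow> ((nat \<Rightarrow> nat) \<Rightarrow> nat pmf)
    \<Rightarrow> (nat \<Rightarrow> nat) \<Rightarrow> (nat \<Rightarrow> nat) pmf" where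
  "step N arr S route q =
     bind_pmf arr (\<lambda>a. bind_pmf (route q) (\<lambda>k. bind_pmf (service_vec N S) (\<lambda>s.
       return_pmf (next_state N q a k s))))"

definition unused_dist :: "nat \<Rightarrow> nat pmf \<Rightarrow> (nat \<Rightarrow> nat pmf) \<Rightarrow> ((nat \<Rightarrow> nat) \<Rightarrow> nat pmf)
    \<Rightarrow> (nat \<Rightarrow> nat) pmf \<Rightarrow> (nat \<Rightarrow> nat) pmf" where
  "unused_dist N arr S route \<pi> =
     bind_pmf \<pi> (\<lambda>q. bind_pmf arr (\<lambda>a. bind_pmf (route q) (\<lambda>k. bind_pmf (service_vec N S) (\<lambda>s.
       return_pmf (unused q a k s)))))"

definition stationary :: "((nat \<Rightarrow> nat) \<Rightarrow> (nat \<Rightarrow> nat) pmf) \<Rightarrow> (nat \<Rightarrow> nat) pmf \<Rightarrow> bool" where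
  "stationary K \<pi> \<longleftrightarrow> bind_pmf \<pi> K = \<pi>"

end

theory Submission imports Defs begin
lemma next_unused: "n < N \<Longrightarrow> next_state N q a k s n * unused q a k s n = 0"
  by (auto simp: next_state_def unused_def)

lemma pointwise:
  assumes "k < N" "\<forall>n. n \<ge> N \<longrightarrow> s n = 0"
  shows "(\<Sum>n<N. next_state N q a k s n) + (\<Sum>n<N. s n)
       = (\<Sum>n<N. q n) + a + (\<Sum>n<N. unused q a k s n)"
proof -
  have "\<And>n. n < N \<Longrightarrow> next_state N q a k s n + s n = q n + routed a k n + unused q a k s n"
    by (auto simp: next_state_def unused_def)
  hence "(\<Sum>n<N. next_state N q a k s n + s n) = (\<Sum>n<N. q n + routed a k n + unused q a k s n)"
    by (intro sum.cong) auto
  moreover have "(\<Sum>n<N. routed a k n) = a" using assms(1) by (simp add: routed_def)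
  ultimately show ?thesis by (simp add: sum.distrib)
qed

lemma bind_ret: "bind_pmf M (\<lambda>x. return_pmf (f x)) = map_pmf f M"
  by (simp add: map_pmf_def)

lemma main_bounds:
  fixes N Amax Smax :: nat and arr :: "nat pmf" and S :: "nat \<Rightarrow> nat pmf"
    and route :: "(nat \<Rightarrow> nat) \<Rightarrow> nat pmf" and \<epsilon> :: real and \<pi> :: "(nat \<Rightarrow> nat) pmf"
  assumes eps: "\<epsilon> > 0"
    and arrb: "set_pmf arr \<subseteq> {..Amax}"
    and Sb: "\<forall>n<N. set_pmf (S n) \<subseteq> {..Smax}"
    and rb: "\<forall>q. set_pmf (route q) \<subseteq> {..<N}"
    and mean: "measure_pmf.expectation arr real
         = (\<Sum>n<N. measure_pmf.expectation (S n) real) - \<epsilon>"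
    and st: "stationary (step N arr S route) \<pi>"
    and int: "integrable (measure_pmf \<pi>) (\<lambda>q. \<Sum>n<N. real (q n))"
  shows "(\<integral>\<^sup>+u. of_nat (\<Sum>n<N. u n) \<partial>unused_dist N arr S route \<pi>) = ennreal \<epsilon>"
    and "\<forall>u\<in>set_pmf (unused_dist N arr S route \<pi>). \<forall>n. u n \<le> Smax \<and> (n \<ge> N \<longrightarrow> u n = 0)"
proof -
  define sv where "sv = service_vec N S"
  define J where "J = bind_pmf \<pi> (\<lambda>q. bind_pmf arr (\<lambda>a. bind_pmf (route q) (\<lambda>k.
        map_pmf (\<lambda>s. (q,a,k,s)) sv)))"
  have svset: "s \<in> set_pmf sv \<Longrightarrow> (\<forall>n. n \<ge> N \<longrightarrow> s n = 0) \<and> (\<forall>n<N. s n \<in> set_pmf (S n))" for s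
    unfolding sv_def service_vec_def using set_Pi_pmf[of "{..<N}" 0 S]
    by (auto simp: PiE_dflt_def)
  have Jset: "x \<in> set_pmf J \<Longrightarrow> (case x of (q,a,k,s) \<Rightarrow> k < N \<and> (\<forall>n. n \<ge> N \<longrightarrow> s n = 0) \<and> (\<forall>n<N. s n \<in> set_pmf (S n)))" for x
    using rb svset unfolding J_def by auto
  have ud: "unused_dist N arr S route \<pi> = map_pmf (\<lambda>(q,a,k,s). unused q a k s) J"
    unfolding unused_dist_def J_def sv_def by (simp add: map_bind_pmf bind_ret pmf.map_comp o_def)
  have stp: "\<pi> = map_pmf (\<lambda>(q,a,k,s). next_state N q a k s) J"
    using st unfolding stationary_def step_def J_def sv_def
    by (simp add: map_bind_pmf bind_ret pmf.map_comp o_def)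
  define EQ where "EQ = (\<integral>\<^sup>+q. of_nat (\<Sum>n<N. q n) \<partial>\<pi>)"
  have EQfin: "EQ \<noteq> \<infinity>"
  proof -
    have "(\<integral>\<^sup>+q. ennreal (norm (\<Sum>n<N. real (q n))) \<partial>\<pi>) < \<infinity>"
      using int by (simp add: integrable_iff_bounded)
    moreover have "EQ = (\<integral>\<^sup>+q. ennreal (norm (\<Sum>n<N. real (q n))) \<partial>\<pi>)"
      unfolding EQ_def by (intro nn_integral_cong) (simp add: ennreal_of_nat_eq_real_of_nat abs_of_nonneg sum_nonneg)
    ultimately show ?thesis by simp
  qed
  have J1: "(\<integral>\<^sup>+x. of_nat (case x of (q,a,k,s) \<Rightarrow> \<Sum>n<N. next_state N q a k s n) \<partial>J) = EQ"
    unfolding EQ_def by (subst stp) (simp add: case_prod_unfold)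
  have J2: "(\<integral>\<^sup>+x. of_nat (case x of (q,a,k,s) \<Rightarrow> \<Sum>n<N. q n) \<partial>J) = EQ"
    unfolding EQ_def J_def by (simp add: measure_pmf.emeasure_space_1)
  have J3: "(\<integral>\<^sup>+x. of_nat (case x of (q,a,k,s) \<Rightarrow> a) \<partial>J) = (\<integral>\<^sup>+a. of_nat a \<partial>arr)"
    unfolding J_def by (simp add: measure_pmf.emeasure_space_1)
  have J4: "(\<integral>\<^sup>+x. of_nat (case x of (q,a,k,s) \<Rightarrow> \<Sum>n<N. s n) \<partial>J) = (\<integral>\<^sup>+s. of_nat (\<Sum>n<N. s n) \<partial>sv)"
    unfolding J_def by (simp add: measure_pmf.emeasure_space_1)
  have J5: "(\<integral>\<^sup>+x. of_nat (case x of (q,a,k,s) \<Rightarrow> \<Sum>n<N. unused q a k s n) \<partial>J)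
     = (\<integral>\<^sup>+u. of_nat (\<Sum>n<N. u n) \<partial>unused_dist N arr S route \<pi>)"
    unfolding ud by (simp add: case_prod_unfold)
  have split: "(\<integral>\<^sup>+x. of_nat (case x of (q,a,k,s) \<Rightarrow> \<Sum>n<N. next_state N q a k s n) \<partial>J)
      + (\<integral>\<^sup>+x. of_nat (case x of (q,a,k,s) \<Rightarrow> \<Sum>n<N. s n) \<partial>J)
      = (\<integral>\<^sup>+x. of_nat (case x of (q,a,k,s) \<Rightarrow> \<Sum>n<N. q n) \<partial>J)
      + (\<integral>\<^sup>+x. of_nat (case x of (q,a,k,s) \<Rightarrow> a) \<partial>J)
      + (\<integral>\<^sup>+x. of_nat (case x of (q,a,k,s) \<Rightarrow> \<Sum>n<N. unused q a k s n) \<partial>J)"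
  proof -
    have "(\<integral>\<^sup>+x. of_nat (case x of (q,a,k,s) \<Rightarrow> \<Sum>n<N. next_state N q a k s n) \<partial>J)
      + (\<integral>\<^sup>+x. of_nat (case x of (q,a,k,s) \<Rightarrow> \<Sum>n<N. s n) \<partial>J)
      = (\<integral>\<^sup>+x. of_nat (case x of (q,a,k,s) \<Rightarrow> \<Sum>n<N. next_state N q a k s n)
           + of_nat (case x of (q,a,k,s) \<Rightarrow> \<Sum>n<N. s n) \<partial>J)"
      by (rule nn_integral_add[symmetric]) auto
    also have "\<dots> = (\<integral>\<^sup>+x. of_nat (case x of (q,a,k,s) \<Rightarrow> \<Sum>n<N. q n)
         + of_nat (case x of (q,a,k,s) \<Rightarrow> a)
         + of_nat (case x of (q,a,k,s) \<Rightarrow> \<Sum>n<N. unused q a k s n) \<partial>J)"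
    proof (rule nn_integral_cong_AE, unfold AE_measure_pmf_iff, intro ballI)
      fix x assume "x \<in> set_pmf J"
      from Jset[OF this] pointwise show "of_nat (case x of (q,a,k,s) \<Rightarrow> \<Sum>n<N. next_state N q a k s n)
           + of_nat (case x of (q,a,k,s) \<Rightarrow> \<Sum>n<N. s n)
         = (of_nat (case x of (q,a,k,s) \<Rightarrow> \<Sum>n<N. q n)
         + of_nat (case x of (q,a,k,s) \<Rightarrow> a)
         + of_nat (case x of (q,a,k,s) \<Rightarrow> \<Sum>n<N. unused q a k s n) :: ennreal)"
        by (auto simp flip: of_nat_add)
    qed
    also have "\<dots> = (\<integral>\<^sup>+x. of_nat (case x of (q,a,k,s) \<Rightarrow> \<Sum>n<N. q n)
         + of_nat (case x of (q,a,k,s) \<Rightarrow> a) \<partial>J)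
         + (\<integral>\<^sup>+x. of_nat (case x of (q,a,k,s) \<Rightarrow> \<Sum>n<N. unused q a k s n) \<partial>J)"
      by (rule nn_integral_add) auto
    also have "(\<integral>\<^sup>+x. of_nat (case x of (q,a,k,s) \<Rightarrow> \<Sum>n<N. q n)
         + of_nat (case x of (q,a,k,s) \<Rightarrow> a) \<partial>J) = 
        (\<integral>\<^sup>+x. of_nat (case x of (q,a,k,s) \<Rightarrow> \<Sum>n<N. q n) \<partial>J)
      + (\<integral>\<^sup>+x. of_nat (case x of (q,a,k,s) \<Rightarrow> a) \<partial>J)"
      by (rule nn_integral_add) auto
    finally show ?thesis .
  qed
  define EU where "EU = (\<integral>\<^sup>+u. of_nat (\<Sum>n<N. u n) \<partial>unused_dist N arr S route \<pi>)"
  define \<mu> where "\<mu> = (\<Sum>n<N. measure_pmf.expectation (S n) real)"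
  have ES: "(\<integral>\<^sup>+s. of_nat (\<Sum>n<N. s n) \<partial>sv) = ennreal \<mu>"
  proof -
    have "(\<integral>\<^sup>+s. of_nat (\<Sum>n<N. s n) \<partial>sv) = (\<Sum>n<N. \<integral>\<^sup>+s. of_nat (s n) \<partial>sv)"
      by (simp add: nn_integral_sum)
    also have "\<dots> = (\<Sum>n<N. ennreal (measure_pmf.expectation (S n) real))"
    proof (rule sum.cong[OF refl])
      fix n assume n: "n \<in> {..<N}"
      have "(\<integral>\<^sup>+s. of_nat (s n) \<partial>sv) = (\<integral>\<^sup>+x. of_nat x \<partial>map_pmf (\<lambda>f. f n) sv)" by simp
      also have "map_pmf (\<lambda>f. f n) sv = S n" unfolding sv_def service_vec_def
        using n by (subst Pi_pmf_component) auto
      also have "(\<integral>\<^sup>+x. of_nat x \<partial>S n) = (\<integral>\<^sup>+x. ennreal (real x) \<partial>S n)"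
        by (simp add: ennreal_of_nat_eq_real_of_nat)
      also have "\<dots> = ennreal (measure_pmf.expectation (S n) real)"
        using Sb n by (intro nn_integral_eq_integral integrable_measure_pmf_finite)
           (auto intro: finite_subset)
      finally show "(\<integral>\<^sup>+s. of_nat (s n) \<partial>sv) = ennreal (measure_pmf.expectation (S n) real)" .
    qed
    also have "\<dots> = ennreal \<mu>" unfolding \<mu>_def
      by (rule sum_ennreal) (auto intro: Bochner_Integration.integral_nonneg)
    finally show ?thesis .
  qed
  have EA: "(\<integral>\<^sup>+a. of_nat a \<partial>arr) = ennreal (\<mu> - \<epsilon>)"
  proof -
    have "(\<integral>\<^sup>+a. of_nat a \<partial>arr) = (\<integral>\<^sup>+x. ennreal (real x) \<partial>arr)"
      by (simp add: ennreal_of_nat_eq_real_of_nat)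
    also have "\<dots> = ennreal (measure_pmf.expectation arr real)"
      using arrb by (intro nn_integral_eq_integral integrable_measure_pmf_finite)
         (auto intro: finite_subset)
    finally show ?thesis using mean \<mu>_def by simp
  qed
  have Anonneg: "\<mu> - \<epsilon> \<ge> 0" using mean unfolding \<mu>_def
    by (metis Bochner_Integration.integral_nonneg of_nat_0_le_iff)
  have eq: "ennreal \<mu> = ennreal (\<mu> - \<epsilon>) + EU"
    using split J1 J2 J3 J4 J5 EQfin ES EA unfolding EU_def
    by (simp add: ennreal_add_left_cancel add.assoc)
  then have "EU \<noteq> \<infinity>" by auto
  then obtain e where e: "EU = ennreal e" "e \<ge> 0" by (cases EU) auto
  have "ennreal \<mu> = ennreal (\<mu> - \<epsilon> + e)" using eq e Anonneg by (simp add: ennreal_plus)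
  hence "\<mu> = \<mu> - \<epsilon> + e" using Anonneg e eps by (subst (asm) ennreal_inj) auto
  hence "e = \<epsilon>" by simp
  with e show "(\<integral>\<^sup>+u. of_nat (\<Sum>n<N. u n) \<partial>unused_dist N arr S route \<pi>) = ennreal \<epsilon>"
    unfolding EU_def by simp
  show "\<forall>u\<in>set_pmf (unused_dist N arr S route \<pi>). \<forall>n. u n \<le> Smax \<and> (n \<ge> N \<longrightarrow> u n = 0)"
  proof (intro ballI allI)
    fix u n assume "u \<in> set_pmf (unused_dist N arr S route \<pi>)"
    then obtain q a k s where x: "(q,a,k,s) \<in> set_pmf J" and u: "u = unused q a k s"
      unfolding ud by auto
    from Jset[OF x] Sb show "u n \<le> Smax \<and> (n \<ge> N \<longrightarrow> u n = 0)"
      unfolding u unused_def by (cases "n < N") (force simp: not_less)+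
  qed
qed
lemma exp_bound:
  fixes M :: "(nat \<Rightarrow> nat) pmf" and g :: "(nat \<Rightarrow> nat) \<Rightarrow> real"
  assumes EU: "(\<integral>\<^sup>+u. of_nat (\<Sum>n<N. u n) \<partial>M) = ennreal \<epsilon>" and C: "C \<ge> 0" and eps: "\<epsilon> \<ge> 0"
    and g: "\<And>u. u \<in> set_pmf M \<Longrightarrow> 0 \<le> g u \<and> g u \<le> C * (\<Sum>n<N. real (u n))"
  shows "measure_pmf.expectation M g \<le> C * \<epsilon>"
proof -
  have E: "measure_pmf.expectation M g = enn2real (\<integral>\<^sup>+u. ennreal (g u) \<partial>M)"
    using g by (intro integral_eq_nn_integral) (auto simp: AE_measure_pmf_iff)
  have "(\<integral>\<^sup>+u. ennreal (g u) \<partial>M) \<le> (\<integral>\<^sup>+u. ennreal C * of_nat (\<Sum>n<N. u n) \<partial>M)"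
  proof (rule nn_integral_mono_AE, unfold AE_measure_pmf_iff, intro ballI)
    fix u assume "u \<in> set_pmf M"
    with g C show "ennreal (g u) \<le> ennreal C * of_nat (\<Sum>n<N. u n)"
      by (simp add: ennreal_of_nat_eq_real_of_nat ennreal_mult'[symmetric] sum_nonneg)
  qed
  also have "\<dots> = ennreal C * ennreal \<epsilon>" using EU by (simp add: nn_integral_cmult)
  also have "\<dots> = ennreal (C * \<epsilon>)" using C eps by (simp add: ennreal_mult)
  finally have "(\<integral>\<^sup>+u. ennreal (g u) \<partial>M) \<le> ennreal (C * \<epsilon>)" .
  hence "enn2real (\<integral>\<^sup>+u. ennreal (g u) \<partial>M) \<le> enn2real (ennreal (C * \<epsilon>))"
    by (rule enn2real_mono) simp
  thus ?thesis using C eps E by simp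
qed

theorem lemma2:
  "\<exists>(c1 :: nat \<Rightarrow> nat \<Rightarrow> real) (cr :: nat \<Rightarrow> nat \<Rightarrow> real \<Rightarrow> real).
     \<forall>(N :: nat) (Amax :: nat) (Smax :: nat) (arr :: nat pmf) (S :: nat \<Rightarrow> nat pmf)
       (route :: (nat \<Rightarrow> nat) \<Rightarrow> nat pmf) (\<epsilon> :: real).
       N \<ge> 1 \<longrightarrow> \<epsilon> > 0 \<longrightarrow>
       set_pmf arr \<subseteq> {..Amax} \<longrightarrow>
       (\<forall>n<N. set_pmf (S n) \<subseteq> {..Smax}) \<longrightarrow>
       (\<forall>q. set_pmf (route q) \<subseteq> {..<N}) \<longrightarrow>
       measure_pmf.expectation arr real
         = (\<Sum>n<N. measure_pmf.expectation (S n) real) - \<epsilon> \<longrightarrow>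
       (\<forall>q a k s n. n < N \<longrightarrow> next_state N q a k s n * unused q a k s n = 0) \<and>
       (\<forall>\<pi>. stationary (step N arr S route) \<pi> \<longrightarrow>
          integrable (measure_pmf \<pi>) (\<lambda>q. \<Sum>n<N. real (q n)) \<longrightarrow>
          measure_pmf.expectation (unused_dist N arr S route \<pi>)
              (\<lambda>u. (\<Sum>n<N. real (u n))^2) \<le> c1 N Smax * \<epsilon> \<and>
          (\<forall>r::real. r > 1 \<longrightarrow>
             measure_pmf.expectation (unused_dist N arr S route \<pi>)
              (\<lambda>u. \<Sum>n<N. real (u n) powr r) \<le> cr N Smax r * \<epsilon>))"
proof (intro exI[of _ "\<lambda>N Smax. real N * real Smax"] exI[of _ "\<lambda>N Smax r. real Smax powr (r - 1)"]
    allI impI)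
  fix N Amax Smax :: nat and arr :: "nat pmf" and S :: "nat \<Rightarrow> nat pmf"
    and route :: "(nat \<Rightarrow> nat) \<Rightarrow> nat pmf" and \<epsilon> :: real
  assume h0: "1 \<le> N" "0 < \<epsilon>" "set_pmf arr \<subseteq> {..Amax}" "\<forall>n<N. set_pmf (S n) \<subseteq> {..Smax}"
    "\<forall>q. set_pmf (route q) \<subseteq> {..<N}"
    "measure_pmf.expectation arr real = (\<Sum>n<N. measure_pmf.expectation (S n) real) - \<epsilon>"
  show "(\<forall>q a k s n. n < N \<longrightarrow> next_state N q a k s n * unused q a k s n = 0) \<and>
       (\<forall>\<pi>. stationary (step N arr S route) \<pi> \<longrightarrow>
          integrable (measure_pmf \<pi>) (\<lambda>q. \<Sum>n<N. real (q n)) \<longrightarrow>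
          measure_pmf.expectation (unused_dist N arr S route \<pi>)
              (\<lambda>u. (\<Sum>n<N. real (u n))^2) \<le> real N * real Smax * \<epsilon> \<and>
          (\<forall>r::real. r > 1 \<longrightarrow>
             measure_pmf.expectation (unused_dist N arr S route \<pi>)
              (\<lambda>u. \<Sum>n<N. real (u n) powr r) \<le> real Smax powr (r - 1) * \<epsilon>))"
  proof (intro conjI allI impI)
  show "next_state N q a k s n * unused q a k s n = 0" if "n < N" for q a k s n
    using next_unused that by blast
  fix \<pi> :: "(nat \<Rightarrow> nat) pmf"
  assume h1: "stationary (step N arr S route) \<pi>" "integrable (measure_pmf \<pi>) (\<lambda>q. \<Sum>n<N. real (q n))"
  note h = h0 h1
  note mb = main_bounds[OF h(2-8)]
  show "measure_pmf.expectation (unused_dist N arr S route \<pi>) (\<lambda>u. (\<Sum>n<N. real (u n))^2)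
        \<le> real N * real Smax * \<epsilon>"
  proof (rule exp_bound[OF mb(1)])
    fix u assume "u \<in> set_pmf (unused_dist N arr S route \<pi>)"
    with mb(2) have ub: "\<forall>n. u n \<le> Smax" by blast
    have s0: "0 \<le> (\<Sum>n<N. real (u n))" by (simp add: sum_nonneg)
    have "(\<Sum>n<N. real (u n)) \<le> (\<Sum>n<N. real Smax)" using ub by (intro sum_mono) simp
    hence sb: "(\<Sum>n<N. real (u n)) \<le> real N * real Smax" by simp
    show "0 \<le> (\<Sum>n<N. real (u n))^2 \<and> (\<Sum>n<N. real (u n))^2 \<le> real N * real Smax * (\<Sum>n<N. real (u n))"
      using mult_right_mono[OF sb s0] by (simp add: power2_eq_square)
  qed (use h in auto)
  fix r :: real assume r: "1 < r"
  show "measure_pmf.expectation (unused_dist N arr S route \<pi>) (\<lambda>u. \<Sum>n<N. real (u n) powr r)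
        \<le> real Smax powr (r - 1) * \<epsilon>"
  proof (rule exp_bound[OF mb(1)])
    fix u assume "u \<in> set_pmf (unused_dist N arr S route \<pi>)"
    with mb(2) have ub: "\<forall>n. u n \<le> Smax" by blast
    have "real (u n) powr r \<le> real Smax powr (r - 1) * real (u n)" for n
    proof (cases "u n = 0")
      case True thus ?thesis by simp
    next
      case False
      hence "real (u n) powr r = real (u n) powr (r - 1) * real (u n)"
        by (simp add: powr_diff)
      also have "\<dots> \<le> real Smax powr (r - 1) * real (u n)"
        using ub r by (intro mult_right_mono powr_mono2) auto
      finally show ?thesis .
    qed
    hence "(\<Sum>n<N. real (u n) powr r) \<le> (\<Sum>n<N. real Smax powr (r - 1) * real (u n))"
      by (intro sum_mono)
    thus "0 \<le> (\<Sum>n<N. real (u n) powr r) \<and> (\<Sum>n<N. real (u n) powr r) \<le> real Smax powr (r - 1) * (\<Sum>n<N. real (u n))"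
      by (simp add: sum_distrib_left sum_nonneg)
  qed (use h in auto)
qed
qed
end
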